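(* If $C$ and $C'$ are two cycle graphs with the same degree sequence, then there exists a u-switch sequence transforming $C$ into $C'$: 2-switches $\tau_1,\dots,\tau_k$ ($k\ge0$) such that, with $C_0=C$ and $C_i=\tau_i(C_{i-1})$, each $\tau_i$ is a u-switch over $C_{i-1}$ and $C_k=C'$.
   Context: Graphs are finite, simple, undirected, labeled with vertex set $[n]$; the degree sequence of $G$ is $(d_1,\dots,d_n)$ with $d_i$ the degree of vertex $i$ (so two graphs have the same degree sequence iff each vertex has the same degree in both). A unicyclic graph is a connected graph with exactly one cycle. For vertices $a,b,c,d$, $A=\binom{a\ b}{c\ d}$ is interchangeable in $G$ if $ab,cd\in E(G)$, $\{a,b\}\cap\{c,d\}=\varnothing$, $ac,bd\notin E(G)$; the 2-switch $\tau_A$ sends $G$ to $G-ab-cd+ac+bd$ if $A$ is interchangeable and to $G$ otherwise (trivial). A nontrivial 2-switch $\tau$ over a unicyclic $U$ is a u-switch if $\tau(U)$ is unicyclic. *)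

theory Defs
  imports Main
begin

definition graph :: "nat \<Rightarrow> nat set set \<Rightarrow> bool" where
  "graph n E \<longleftrightarrow> (\<forall>e\<in>E. \<exists>a b. e = {a,b} \<and> a \<noteq> b \<and> a \<in> {1..n} \<and> b \<in> {1..n})"

definition degree :: "nat set set \<Rightarrow> nat \<Rightarrow> nat" where
  "degree E v = card {e\<in>E. v \<in> e}"

definition same_degree_sequence :: "nat \<Rightarrow> nat set set \<Rightarrow> nat set set \<Rightarrow> bool" where
  "same_degree_sequence n E E' \<longleftrightarrow> (\<forall>v\<in>{1..n}. degree E v = degree E' v)"

definition cycle_edges :: "nat list \<Rightarrow> nat set set" where
  "cycle_edges vs = {{vs ! i, vs ! ((i + 1) mod length vs)} | i. i < length vs}"

definition is_cycle_in :: "nat set set \<Rightarrow> nat set set \<Rightarrow> bool" where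
  "is_cycle_in E C \<longleftrightarrow> (\<exists>vs. distinct vs \<and> length vs \<ge> 3 \<and> C = cycle_edges vs \<and> C \<subseteq> E)"

definition connected_graph :: "nat \<Rightarrow> nat set set \<Rightarrow> bool" where
  "connected_graph n E \<longleftrightarrow>
     (\<forall>u\<in>{1..n}. \<forall>v\<in>{1..n}. (u, v) \<in> {(a, b). {a, b} \<in> E}\<^sup>*)"

definition unicyclic :: "nat \<Rightarrow> nat set set \<Rightarrow> bool" where
  "unicyclic n E \<longleftrightarrow> graph n E \<and> connected_graph n E \<and> (\<exists>!C. is_cycle_in E C)"

definition cycle_graph :: "nat \<Rightarrow> nat set set \<Rightarrow> bool" where
  "cycle_graph n E \<longleftrightarrow>
     (\<exists>vs. distinct vs \<and> set vs = {1..n} \<and> length vs \<ge> 3 \<and> E = cycle_edges vs)"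

(* A = (a b / c d), represented as (a, b, c, d) *)
definition interchangeable :: "nat set set \<Rightarrow> nat \<times> nat \<times> nat \<times> nat \<Rightarrow> bool" where
  "interchangeable E A = (case A of (a, b, c, d) \<Rightarrow>
     {a,b} \<in> E \<and> {c,d} \<in> E \<and> {a,b} \<inter> {c,d} = {} \<and> {a,c} \<notin> E \<and> {b,d} \<notin> E)"

definition two_switch :: "nat \<times> nat \<times> nat \<times> nat \<Rightarrow> nat set set \<Rightarrow> nat set set" where
  "two_switch A E = (case A of (a, b, c, d) \<Rightarrow>
     if interchangeable E A then (E - {{a,b}, {c,d}}) \<union> {{a,c}, {b,d}} else E)"

definition u_switch :: "nat \<Rightarrow> nat set set \<Rightarrow> nat \<times> nat \<times> nat \<times> nat \<Rightarrow> bool" where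
  "u_switch n U A \<longleftrightarrow> unicyclic n U \<and> interchangeable U A \<and> unicyclic n (two_switch A U)"

fun u_switch_seq :: "nat \<Rightarrow> nat set set \<Rightarrow> (nat \<times> nat \<times> nat \<times> nat) list \<Rightarrow> nat set set \<Rightarrow> bool" where
  "u_switch_seq n G [] G' \<longleftrightarrow> G = G'"
| "u_switch_seq n G (A # As) G' \<longleftrightarrow> u_switch n G A \<and> u_switch_seq n (two_switch A G) As G'"

end

theory Submission
  imports Defs
begin
fun pe :: "nat list \<Rightarrow> nat set set" where
  "pe (x # y # r) = insert {x,y} (pe (y # r))" | "pe _ = {}"

lemma pe_mem: "e \<in> pe L \<Longrightarrow> e \<subseteq> set L"
  by (induction L rule: pe.induct) auto

lemma pe_snoc: "xs \<noteq> [] \<Longrightarrow> pe (xs @ [y]) = insert {last xs, y} (pe xs)"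
proof (induction xs rule: pe.induct)
  case (1 x z r) then show ?case by (auto simp: insert_commute)
qed auto

lemma pe_append: "pe (xs @ y # ys) = pe (xs @ [y]) \<union> pe (y # ys)"
proof (induction xs rule: pe.induct)
  case (1 x z r) then show ?case by auto
next
  case ("2_2" v) then show ?case by (cases ys) auto
qed auto

lemma pe_rev: "pe (rev L) = pe L"
proof (induction L)
  case (Cons x L) then show ?case
  proof (cases L)
    case (Cons z zs)
    have "pe (rev (x # L)) = pe (rev L @ [x])" by simp
    also have "\<dots> = insert {last (rev L), x} (pe (rev L))" by (rule pe_snoc) (simp add: Cons)
    also have "\<dots> = insert {z, x} (pe L)" using Cons.IH by (simp add: Cons last_rev)
    also have "\<dots> = pe (x # L)" by (simp add: Cons insert_commute)
    finally show ?thesis .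
  qed simp
qed auto

lemma pe_nth: "pe L = {{L!i, L!Suc i} | i. Suc i < length L}"
proof (induction L rule: pe.induct)
  case (1 x y r)
  show ?case
  proof
    show "pe (x # y # r) \<subseteq> {{(x # y # r) ! i, (x # y # r) ! Suc i} |i. Suc i < length (x # y # r)}"
      using 1 apply auto
       apply (rule exI[of _ 0]; simp)
      by (rule_tac x="Suc i" in exI; simp)
    show "{{(x # y # r) ! i, (x # y # r) ! Suc i} |i. Suc i < length (x # y # r)} \<subseteq> pe (x # y # r)"
      using 1 by (auto simp: less_Suc_eq_0_disj)
  qed
qed auto

lemma cycle_pe: "vs \<noteq> [] \<Longrightarrow> cycle_edges vs = pe (vs @ [hd vs])"
proof -
  assume ne: "vs \<noteq> []"
  let ?L = "vs @ [hd vs]"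
  have "\<And>i. i < length vs \<Longrightarrow> {vs ! i, vs ! ((i + 1) mod length vs)} = {?L!i, ?L!Suc i}"
  proof -
    fix i assume i: "i < length vs"
    show "{vs ! i, vs ! ((i + 1) mod length vs)} = {?L!i, ?L!Suc i}"
    proof (cases "Suc i < length vs")
      case True then show ?thesis using i by (simp add: nth_append)
    next
      case False then have "Suc i = length vs" using i by simp
      then show ?thesis using i ne by (simp add: nth_append hd_conv_nth)
    qed
  qed
  then show ?thesis unfolding cycle_edges_def pe_nth by (auto; metis length_append_singleton less_Suc_eq)
qed


lemma pe_Cons: "pe (x # xs) = (if xs = [] then {} else insert {x, hd xs} (pe xs))"
  by (cases xs) auto

lemma cycle_rotate1: "cycle_edges (rotate1 vs) = cycle_edges vs"
proof (cases vs)
  case (Cons x xs)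
  show ?thesis
  proof (cases "xs = []")
    case False
    have "cycle_edges (rotate1 vs) = pe ((xs @ [x]) @ [hd xs])"
      using False by (simp add: cycle_pe Cons)
    also have "\<dots> = insert {x, hd xs} (insert {last xs, x} (pe xs))"
      using False pe_snoc[of "xs@[x]" "hd xs"] pe_snoc[of xs x] by simp
    also have "\<dots> = pe (x # xs @ [x])" using False by (simp add: pe_Cons pe_snoc)
    also have "\<dots> = cycle_edges vs" by (simp add: cycle_pe \<open>vs = x # xs\<close>)
    finally show ?thesis .
  qed (simp add: \<open>vs = x # xs\<close>)
qed simp

lemma cycle_rotate: "cycle_edges (rotate m vs) = cycle_edges vs"
  by (induction m) (auto simp: cycle_rotate1)

lemma cycle_rev: "cycle_edges (rev vs) = cycle_edges vs"
proof (cases vs rule: rev_exhaust)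
  case (snoc xs y)
  show ?thesis
  proof (cases "xs = []")
    case False
    have "cycle_edges (rev vs) = pe (rev (y # xs @ [y]))"
      by (simp add: cycle_pe snoc)
    also have "\<dots> = pe (y # xs @ [y])" by (rule pe_rev)
    also have "\<dots> = insert {y, hd xs} (insert {last xs, y} (pe xs))"
      using False by (simp add: pe_Cons pe_snoc)
    also have "\<dots> = pe ((xs @ [y]) @ [hd xs])" using False pe_snoc[of "xs@[y]" "hd xs"] pe_snoc[of xs y] by (simp add: insert_commute)
    also have "\<dots> = cycle_edges vs" using False by (simp add: cycle_pe snoc)
    finally show ?thesis .
  qed (simp add: snoc)
qed simp

lemma nbhd_hd:
  assumes "distinct (w # r)" "length r \<ge> 2"
  shows "{e \<in> cycle_edges (w # r). w \<in> e} = {{w, hd r}, {w, last r}} \<and> hd r \<noteq> last r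
         \<and> hd r \<noteq> w \<and> last r \<noteq> w"
proof -
  have rne: "r \<noteq> []" using assms by auto
  have "cycle_edges (w # r) = pe (w # r @ [w])" by (simp add: cycle_pe)
  also have "\<dots> = insert {w, hd r} (insert {last r, w} (pe r))"
    using rne by (simp add: pe_Cons pe_snoc)
  finally have E: "cycle_edges (w # r) = insert {w, hd r} (insert {last r, w} (pe r))" .
  have "w \<notin> set r" using assms by simp
  then have "\<forall>e \<in> pe r. w \<notin> e" using pe_mem by blast
  moreover have "hd r \<noteq> last r"
  proof
    assume h: "hd r = last r"
    obtain z zs where r: "r = z # zs" using rne by (cases r) auto
    then have "zs \<noteq> []" using assms by auto
    then have "last r \<in> set zs" using r by simp
    then show False using h r assms by auto
  qed
  moreover have "hd r \<noteq> w" "last r \<noteq> w" using assms rne by auto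
  ultimately show ?thesis using E by (auto simp: insert_commute)
qed

lemma nbhd:
  assumes "distinct vs" "length vs \<ge> 3" "w \<in> set vs"
  shows "\<exists>p q. {e \<in> cycle_edges vs. w \<in> e} = {{w, p}, {w, q}} \<and> p \<noteq> q \<and> p \<noteq> w \<and> q \<noteq> w"
proof -
  obtain i where i: "i < length vs" "vs ! i = w" using assms by (metis in_set_conv_nth)
  let ?u = "rotate i vs"
  have ne: "?u \<noteq> []" using assms by auto
  then have "hd ?u = ?u ! 0" by (simp add: hd_conv_nth)
  also have "\<dots> = w" using i nth_rotate[of 0 vs i] by force
  finally have "hd ?u = w" .
  with ne obtain r where u: "?u = w # r" by (cases ?u) auto
  have "distinct (w # r)" using assms u by (metis distinct_rotate)
  moreover have "length r \<ge> 2" using assms u by (metis length_rotate length_Cons Suc_le_mono numeral_3_eq_3 numeral_2_eq_2)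
  ultimately show ?thesis using nbhd_hd[of w r] cycle_rotate[of i vs] u by metis
qed


lemma edge_in_cycle: "Suc i < length vs \<Longrightarrow> {vs ! i, vs ! Suc i} \<in> cycle_edges vs"
  unfolding cycle_edges_def by (rule CollectI, rule exI[of _ i]) simp

lemma cycle_edge_sub: "e \<in> cycle_edges vs \<Longrightarrow> e \<subseteq> set vs"
proof -
  assume "e \<in> cycle_edges vs"
  then obtain i where i: "i < length vs" "e = {vs ! i, vs ! ((i + 1) mod length vs)}"
    unfolding cycle_edges_def by auto
  then have "(i + 1) mod length vs < length vs" by (intro mod_less_divisor) (cases vs, auto)
  then show ?thesis using i by (simp del: mod_less_divisor)
qed

lemma cyc_graph:
  assumes "distinct vs" "set vs = {1..n}" "length vs \<ge> 3"
  shows "graph n (cycle_edges vs)"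
  unfolding graph_def
proof
  fix e assume "e \<in> cycle_edges vs"
  then obtain i where i: "i < length vs" "e = {vs ! i, vs ! ((i + 1) mod length vs)}"
    unfolding cycle_edges_def by auto
  have "i \<noteq> (i + 1) mod length vs"
  proof (cases "i + 1 < length vs")
    case False then have "i + 1 = length vs" using i by simp
    then have "(i + 1) mod length vs = 0" by simp
    then show ?thesis using False assms by auto
  qed simp
  moreover have "(i + 1) mod length vs < length vs" using i by (intro mod_less_divisor) (cases vs, auto)
  ultimately have "vs ! i \<noteq> vs ! ((i + 1) mod length vs)"
    using assms i by (simp add: nth_eq_iff_index_eq del: mod_less_divisor)
  moreover have "vs ! i \<in> {1..n}" "vs ! ((i + 1) mod length vs) \<in> {1..n}"
    using assms i \<open>(i + 1) mod length vs < length vs\<close> nth_mem by blast+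
  ultimately show "\<exists>a b. e = {a, b} \<and> a \<noteq> b \<and> a \<in> {1..n} \<and> b \<in> {1..n}" using i by blast
qed

lemma cyc_connected:
  assumes "distinct vs" "set vs = {1..n}" "length vs \<ge> 3"
  shows "connected_graph n (cycle_edges vs)"
proof -
  let ?R = "{(a, b). {a, b} \<in> cycle_edges vs}"
  have "i < length vs \<Longrightarrow> (vs ! 0, vs ! i) \<in> ?R\<^sup>* \<and> (vs ! i, vs ! 0) \<in> ?R\<^sup>*" for i
  proof (induction i)
    case (Suc i)
    have e: "{vs ! i, vs ! Suc i} \<in> cycle_edges vs" using Suc.prems edge_in_cycle by blast
    then have "(vs ! i, vs ! Suc i) \<in> ?R" "(vs ! Suc i, vs ! i) \<in> ?R" by (auto simp: insert_commute)
    then show ?case using Suc by (meson Suc_lessD converse_rtrancl_into_rtrancl rtrancl.rtrancl_into_rtrancl)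
  qed simp
  then show ?thesis unfolding connected_graph_def using assms
    by (metis (no_types, lifting) in_set_conv_nth rtrancl_trans)
qed

lemma cyc_unique:
  assumes "distinct vs" "set vs = {1..n}" "length vs \<ge> 3"
    and "is_cycle_in (cycle_edges vs) C"
  shows "C = cycle_edges vs"
proof -
  let ?E = "cycle_edges vs"
  obtain ws where ws: "distinct ws" "length ws \<ge> 3" "C = cycle_edges ws" "C \<subseteq> ?E"
    using assms(4) unfolding is_cycle_in_def by auto
  have nb: "{e \<in> ?E. w \<in> e} \<subseteq> C" if w: "w \<in> set ws" for w
  proof -
    obtain p q where pq: "{e \<in> C. w \<in> e} = {{w, p}, {w, q}}" "p \<noteq> q"
      using nbhd[OF ws(1,2) w] ws(3) by blast
    have "{w, p} \<in> ?E" using pq ws(4) by blast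
    then have wv: "w \<in> set vs" using cycle_edge_sub by blast
    obtain p' q' where pq': "{e \<in> ?E. w \<in> e} = {{w, p'}, {w, q'}}" "p' \<noteq> q'"
      using nbhd[OF assms(1,3) wv] by blast
    have c2: "card {{w, p}, {w, q}} = 2" using pq(2) by (auto simp: doubleton_eq_iff card_insert_if)
    have c2': "card {{w, p'}, {w, q'}} = 2" using pq'(2) by (auto simp: doubleton_eq_iff card_insert_if)
    have "{e \<in> C. w \<in> e} \<subseteq> {e \<in> ?E. w \<in> e}" using ws(4) by blast
    then have "{e \<in> C. w \<in> e} = {e \<in> ?E. w \<in> e}"
      using c2 c2' pq pq' by (metis card_subset_eq finite.emptyI finite.insertI)
    then show ?thesis by blast
  qed
  have closed: "b \<in> set ws" if "a \<in> set ws" "{a, b} \<in> ?E" for a b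
  proof -
    have "{a, b} \<in> C" using nb[OF that(1)] that(2) by blast
    then show ?thesis using cycle_edge_sub ws(3) by blast
  qed
  have "{ws ! 0, ws ! Suc 0} \<in> C" using ws edge_in_cycle by auto
  then have w0: "ws ! 0 \<in> set ws" "ws ! 0 \<in> {1..n}"
    using ws cycle_edge_sub assms(2) by blast+
  have allin: "v \<in> set ws" if "v \<in> {1..n}" for v
  proof -
    have "(ws ! 0, v) \<in> {(a, b). {a, b} \<in> ?E}\<^sup>*"
      using cyc_connected[OF assms(1-3)] w0 that unfolding connected_graph_def by blast
    then show ?thesis
      by (induction rule: rtrancl_induct) (auto intro: closed w0)
  qed
  have "?E \<subseteq> C"
  proof
    fix e assume e: "e \<in> ?E"
    then obtain a b where "e = {a, b}" "a \<in> {1..n}"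
      using cyc_graph[OF assms(1-3)] unfolding graph_def by blast
    then show "e \<in> C" using nb[OF allin] e by blast
  qed
  then show ?thesis using ws(4) by blast
qed

lemma cyc_unicyclic:
  assumes "distinct vs" "set vs = {1..n}" "length vs \<ge> 3"
  shows "unicyclic n (cycle_edges vs)"
  unfolding unicyclic_def
  using cyc_graph[OF assms] cyc_connected[OF assms] cyc_unique[OF assms] assms
  unfolding is_cycle_in_def by blast


lemma pe_3:
  assumes "xs \<noteq> []" "P \<noteq> []" "R \<noteq> []"
  shows "pe (xs @ P @ R) = pe xs \<union> pe P \<union> pe R \<union> {{last xs, hd P}, {last P, hd R}}"
proof -
  obtain p P1 where P: "P = p # P1" using assms by (cases P) auto
  obtain r R1 where R: "R = r # R1" using assms by (cases R) auto
  have 1: "pe (xs @ P @ R) = pe (xs @ [p]) \<union> pe (P @ R)"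
    using pe_append[of xs p "P1 @ R"] by (simp add: P)
  have 2: "pe (P @ R) = pe (P @ [r]) \<union> pe R"
    using pe_append[of P r R1] by (simp add: R)
  have 3: "pe (xs @ [p]) = insert {last xs, p} (pe xs)" using assms(1) by (rule pe_snoc)
  have 4: "pe (P @ [r]) = insert {last P, r} (pe P)" using assms(2) by (rule pe_snoc)
  show ?thesis unfolding 1 2 3 4 by (auto simp: P R)
qed

lemma two_opt:
  assumes d: "distinct (xs @ P @ Q)" and ne: "xs \<noteq> []" and lP: "length P \<ge> 2"
    and lxQ: "length (xs @ Q) \<ge> 2"
  shows "interchangeable (cycle_edges (xs @ P @ Q)) (last xs, hd P, last P, hd (Q @ xs))
     \<and> two_switch (last xs, hd P, last P, hd (Q @ xs)) (cycle_edges (xs @ P @ Q))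
        = cycle_edges (xs @ rev P @ Q)"
proof -
  define Q' where "Q' = Q @ [hd xs]"
  define a where "a = last xs"
  define b where "b = hd P"
  define c where "c = last P"
  define d' where "d' = hd Q'"
  have Pne: "P \<noteq> []" using lP by auto
  have hQ: "hd (Q @ xs) = d'" unfolding d'_def Q'_def using ne by (cases Q) auto
  have E1: "cycle_edges (xs @ P @ Q) = pe xs \<union> pe P \<union> pe Q' \<union> {{a, b}, {c, d'}}"
    using ne Pne pe_3[of xs P Q'] by (simp add: cycle_pe Q'_def a_def b_def c_def d'_def)
  have E2: "cycle_edges (xs @ rev P @ Q) = pe xs \<union> pe P \<union> pe Q' \<union> {{a, c}, {b, d'}}"
    using ne Pne pe_3[of xs "rev P" Q'] by (simp add: cycle_pe Q'_def a_def b_def c_def d'_def pe_rev hd_rev last_rev)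
  have setQ': "set Q' = set Q \<union> {hd xs}" by (simp add: Q'_def)
  have a_xs: "a \<in> set xs" using ne by (simp add: a_def)
  have b_P: "b \<in> set P" "c \<in> set P" using Pne by (simp_all add: b_def c_def)
  have bc: "b \<noteq> c"
  proof
    assume "b = c"
    obtain p P1 where P: "P = p # P1" using Pne by (cases P) auto
    then have "P1 \<noteq> []" using lP by auto
    then have "last P \<in> set P1" using P by simp
    then show False using \<open>b = c\<close> d P by (auto simp: b_def c_def)
  qed
  have ad: "a \<noteq> d'"
  proof (cases Q)
    case Nil
    then have "length xs \<ge> 2" using lxQ by simp
    obtain x xs1 where xs: "xs = x # xs1" using ne by (cases xs) auto
    then have "xs1 \<noteq> []" using \<open>length xs \<ge> 2\<close> by auto
    note xs = xs this
    then have "last xs \<in> set xs1" by simp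
    then show ?thesis using d xs Nil by (auto simp: a_def d'_def Q'_def)
  next
    case (Cons q Q1)
    then show ?thesis using d a_xs by (auto simp: a_def d'_def Q'_def)
  qed
  have dQ': "d' \<in> set Q'" unfolding d'_def Q'_def by (cases Q) auto
  have disj: "set xs \<inter> set P = {}" "set P \<inter> set Q' = {}"
  proof -
    have hx: "hd xs \<in> set xs" using ne by simp
    show "set xs \<inter> set P = {}" using d by auto
    have "set P \<inter> set Q = {}" using d by auto
    then show "set P \<inter> set Q' = {}" using hx d unfolding setQ' by auto
  qed
  have nin: "{a, b} \<notin> pe xs \<union> pe P \<union> pe Q'" "{c, d'} \<notin> pe xs \<union> pe P \<union> pe Q'"
       "{a, c} \<notin> pe xs \<union> pe P \<union> pe Q'" "{b, d'} \<notin> pe xs \<union> pe P \<union> pe Q'"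
    using pe_mem[of _ xs] pe_mem[of _ P] pe_mem[of _ Q'] disj a_xs b_P dQ' by blast+
  have ne2: "{a, c} \<noteq> {a, b}" "{a, c} \<noteq> {c, d'}" "{b, d'} \<noteq> {a, b}" "{b, d'} \<noteq> {c, d'}"
    using bc ad by (auto simp: doubleton_eq_iff)
  have "{a, b} \<inter> {c, d'} = {}" using bc ad a_xs b_P dQ' disj by auto
  then have I: "interchangeable (cycle_edges (xs @ P @ Q)) (a, b, c, d')"
    unfolding interchangeable_def E1 using nin ne2 by auto
  moreover have "two_switch (a, b, c, d') (cycle_edges (xs @ P @ Q)) = cycle_edges (xs @ rev P @ Q)"
    unfolding two_switch_def using I E1 E2 nin by auto
  ultimately show ?thesis using hQ by (simp add: a_def b_def c_def)
qed

lemma seq_append: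
  "u_switch_seq n G As G' \<Longrightarrow> u_switch_seq n G' Bs G'' \<Longrightarrow> u_switch_seq n G (As @ Bs) G''"
  by (induction As arbitrary: G) auto

definition reach where
  "reach n vs ws \<longleftrightarrow> (\<exists>As. u_switch_seq n (cycle_edges vs) As (cycle_edges ws))"

lemma reach_trans: "reach n a b \<Longrightarrow> reach n b c \<Longrightarrow> reach n a c"
  unfolding reach_def using seq_append by blast

lemma reach_eq: "cycle_edges a = cycle_edges b \<Longrightarrow> reach n a b"
  unfolding reach_def by (rule exI[of _ "[]"]) simp

lemma reach_step:
  assumes d: "distinct (xs @ P @ Q)" and s: "set (xs @ P @ Q) = {1..n}" and l: "length (xs @ P @ Q) \<ge> 3"
    and ne: "xs \<noteq> []"
  shows "reach n (xs @ P @ Q) (xs @ rev P @ Q)"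
proof (cases "length P \<ge> 2")
  case False
  then have "rev P = P" by (cases P; cases "tl P") auto
  then show ?thesis by (simp add: reach_eq)
next
  case lP: True
  show ?thesis
  proof (cases "length (xs @ Q) \<ge> 2")
    case False
    moreover have "length xs \<ge> 1" using ne by (cases xs) auto
    ultimately have "length Q = 0" "length xs = 1" unfolding length_append by linarith+
    then have "Q = []" "length xs = 1" by simp_all
    then obtain x where "xs = [x]" "Q = []" by (metis One_nat_def length_0_conv length_Suc_conv)
    then have "rotate1 (xs @ rev P @ Q) = rev (xs @ P @ Q)" by simp
    then have "cycle_edges (xs @ P @ Q) = cycle_edges (xs @ rev P @ Q)"
      by (metis cycle_rev cycle_rotate1)
    then show ?thesis by (rule reach_eq)
  next
    case True
    let ?A = "(last xs, hd P, last P, hd (Q @ xs))"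
    have T: "interchangeable (cycle_edges (xs @ P @ Q)) ?A"
      "two_switch ?A (cycle_edges (xs @ P @ Q)) = cycle_edges (xs @ rev P @ Q)"
      using two_opt[OF d ne lP True] by auto
    have U1: "unicyclic n (cycle_edges (xs @ P @ Q))" using cyc_unicyclic[OF d s l] .
    have U2: "unicyclic n (cycle_edges (xs @ rev P @ Q))"
      using cyc_unicyclic[of "xs @ rev P @ Q" n] d s l by auto
    have "u_switch_seq n (cycle_edges (xs @ P @ Q)) [?A] (cycle_edges (xs @ rev P @ Q))"
      using T U1 U2 by (simp add: u_switch_def)
    then show ?thesis unfolding reach_def by blast
  qed
qed


lemma sort_reach:
  assumes ws: "distinct ws" "set ws = {1..n}" "length ws \<ge> 3"
  shows "distinct vs \<Longrightarrow> set vs = {1..n} \<Longrightarrow> take k vs = take k ws \<Longrightarrow> reach n vs ws"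
proof (induction "length ws - k" arbitrary: k vs rule: less_induct)
  case less
  have lv: "length vs = length ws"
    using less.prems ws by (metis distinct_card)
  show ?case
  proof (cases "k < length ws")
    case False
    then have "vs = ws" using less.prems lv by simp
    then show ?thesis by (simp add: reach_eq)
  next
    case kl: True
    define x where "x = ws ! k"
    have "x \<in> set vs" using kl ws less.prems unfolding x_def by (metis nth_mem)
    then obtain j where j: "j < length vs" "vs ! j = x" by (metis in_set_conv_nth)
    have kj: "k \<le> j"
    proof (rule ccontr)
      assume "\<not> k \<le> j"
      then have "vs ! j = ws ! j"
        using less.prems(3) by (metis not_le nth_take)
      then have "ws ! j = ws ! k" using j x_def by simp
      then show False using ws(1) \<open>\<not> k \<le> j\<close> kl j lv by (simp add: nth_eq_iff_index_eq)
    qed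
    have IH: "reach n vs' ws" if "distinct vs'" "set vs' = {1..n}" "take (Suc k) vs' = take (Suc k) ws" for vs'
      using less.hyps[of "Suc k" vs'] that kl by simp
    have tw: "take (Suc k) ws = take k ws @ [x]" using kl by (simp add: x_def take_Suc_conv_app_nth)
    show ?thesis
    proof (cases "k = 0")
      case True
      let ?u = "rotate j vs"
      have "?u ! 0 = x" using j nth_rotate[of 0 vs j] by force
      moreover have "?u \<noteq> []" using j by auto
      ultimately have "take (Suc k) ?u = take (Suc k) ws" using tw True
        by (cases ?u) auto
      then have "reach n ?u ws" using IH less.prems by simp
      moreover have "reach n vs ?u" by (rule reach_eq) (simp add: cycle_rotate)
      ultimately show ?thesis using reach_trans by blast
    next
      case False
      define m where "m = Suc j - k"
      define xs where "xs = take k vs"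
      define P where "P = take m (drop k vs)"
      define Q where "Q = drop m (drop k vs)"
      have vs: "vs = xs @ P @ Q" unfolding xs_def P_def Q_def
        by (simp only: append_take_drop_id)
      have lxs: "length xs = k" using kl lv by (simp add: xs_def)
      have lP: "length P = m" using j kj by (simp add: P_def m_def)
      have Pne: "P \<noteq> []" using lP kj by (auto simp: m_def)
      have "last P = P ! (m - 1)" using Pne lP by (simp add: last_conv_nth)
      also have "\<dots> = vs ! j" using kj j by (simp add: P_def m_def)
      finally have lastP: "last P = x" using j by simp
      have xne: "xs \<noteq> []" using lxs False by auto
      have dv: "distinct (xs @ P @ Q)" using less.prems(1) vs by metis
      have sv: "set (xs @ P @ Q) = {1..n}" using less.prems(2) vs by metis
      have lv3: "length (xs @ P @ Q) \<ge> 3" using lv ws(3) vs by metis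
      have r1: "reach n (xs @ P @ Q) (xs @ rev P @ Q)" by (rule reach_step[OF dv sv lv3 xne])
      have "reach n vs (xs @ rev P @ Q)" using r1 vs by metis
      moreover have "reach n (xs @ rev P @ Q) ws"
      proof (rule IH)
        show "distinct (xs @ rev P @ Q)" using dv by auto
        show "set (xs @ rev P @ Q) = {1..n}" using sv by auto
        have "take (Suc k) (xs @ rev P @ Q) = xs @ [hd (rev P)]"
          using lxs Pne by (cases "rev P") auto
        also have "\<dots> = take k ws @ [x]" using lastP less.prems(3) Pne unfolding xs_def by (simp add: hd_rev)
        finally show "take (Suc k) (xs @ rev P @ Q) = take (Suc k) ws" using tw by simp
      qed
      ultimately show ?thesis by (rule reach_trans)
    qed
  qed
qed

theorem theorem3p8:
  fixes n :: nat and C C' :: "nat set set"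
  assumes "cycle_graph n C" and "cycle_graph n C'"
    and "same_degree_sequence n C C'"
  shows "\<exists>As. u_switch_seq n C As C'"
proof -
  obtain vs where vs: "distinct vs" "set vs = {1..n}" "length vs \<ge> 3" "C = cycle_edges vs"
    using assms(1) unfolding cycle_graph_def by auto
  obtain ws where ws: "distinct ws" "set ws = {1..n}" "length ws \<ge> 3" "C' = cycle_edges ws"
    using assms(2) unfolding cycle_graph_def by auto
  have "reach n vs ws" using sort_reach[OF ws(1-3) vs(1,2), of 0] by simp
  then show ?thesis unfolding reach_def using vs ws by simp
qed

end
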